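(* Let $\varpi:\mathbb R\to\mathbb R$ be such that $e^{i\varpi}$ is continuous and $1$-periodic, let $K\in\mathbb Z$ and $\alpha\in\mathbb R$. Let $C_{per}$ be the space of continuous $1$-periodic functions with the uniform norm, and define $\lambda_{\alpha,K}:C_{per}\to C_{per}$ by $(\lambda_{\alpha,K}\Phi)(x)=\tilde\Phi_\alpha(x)e^{-2Ki\varpi(x)}$, where $Q_\alpha(x)=\int_0^x\Phi(t)e^{i\alpha t}dt$ and $\tilde\Phi_\alpha(x)=-iQ_\alpha(x)e^{-i\alpha x}(1-e^{i\alpha})+iQ_\alpha(1)e^{-i\alpha x}$. Then the operator norm satisfies $\|\lambda_{\alpha,K}\|\le2$.
   Context: In the paper $\varpi(x)=\mathrm{Arg}\,p(x)$, where $p(x)e^{ikx}$ is a Floquet solution of a periodic Schrödinger equation. *)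

theory Defs
  imports "HOL-Analysis.Analysis"
begin

definition C_per :: "(real \<Rightarrow> complex) set" where
  "C_per = {f. continuous_on UNIV f \<and> (\<forall>x. f (x + 1) = f x)}"

definition unif_norm :: "(real \<Rightarrow> complex) \<Rightarrow> real" where
  "unif_norm f = (SUP x. cmod (f x))"

definition oint :: "real \<Rightarrow> (real \<Rightarrow> complex) \<Rightarrow> complex" where
  "oint x g = (if 0 \<le> x then integral {0..x} g else - integral {x..0} g)"

definition Q_alpha :: "real \<Rightarrow> (real \<Rightarrow> complex) \<Rightarrow> real \<Rightarrow> complex" where
  "Q_alpha \<alpha> \<Phi> x = oint x (\<lambda>t. \<Phi> t * exp (\<i> * complex_of_real (\<alpha> * t)))"

definition Phi_tilde :: "real \<Rightarrow> (real \<Rightarrow> complex) \<Rightarrow> real \<Rightarrow> complex" where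
  "Phi_tilde \<alpha> \<Phi> x =
     - \<i> * Q_alpha \<alpha> \<Phi> x * exp (- \<i> * complex_of_real (\<alpha> * x)) * (1 - exp (\<i> * complex_of_real \<alpha>))
     + \<i> * Q_alpha \<alpha> \<Phi> 1 * exp (- \<i> * complex_of_real (\<alpha> * x))"

definition lambda_op :: "(real \<Rightarrow> real) \<Rightarrow> real \<Rightarrow> int \<Rightarrow> (real \<Rightarrow> complex) \<Rightarrow> real \<Rightarrow> complex" where
  "lambda_op w \<alpha> K \<Phi> x =
     Phi_tilde \<alpha> \<Phi> x * exp (- 2 * of_int K * \<i> * complex_of_real (w x))"

end

theory Submission
  imports Defs
begin

lemma oint_repr:
  fixes g :: "real \<Rightarrow> complex"
  assumes g: "continuous_on UNIV g" and a: "a \<le> 0" "a \<le> u"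
  shows "oint u g = integral {a..u} g - integral {a..0} g"
proof (cases "0 \<le> u")
  case True
  have "integral {a..0} g + integral {0..u} g = integral {a..u} g"
    by (rule Henstock_Kurzweil_Integration.integral_combine) (use a True g in \<open>auto intro: integrable_continuous_real continuous_on_subset\<close>)
  then show ?thesis using True unfolding oint_def by (simp add: algebra_simps)
next
  case False
  have "integral {a..u} g + integral {u..0} g = integral {a..0} g"
    by (rule Henstock_Kurzweil_Integration.integral_combine) (use a False g in \<open>auto intro: integrable_continuous_real continuous_on_subset\<close>)
  then show ?thesis using False unfolding oint_def by (simp add: algebra_simps)
qed

lemma oint_deriv:
  fixes g :: "real \<Rightarrow> complex"
  assumes g: "continuous_on UNIV g"
  shows "((\<lambda>u. oint u g) has_vector_derivative g x) (at x)"
proof -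
  define a where "a = min x 0 - 1"
  define b where "b = max x 0 + 1"
  have xab: "x \<in> {a..b}" unfolding a_def b_def by auto
  have d1: "((\<lambda>u. integral {a..u} g) has_vector_derivative g x) (at x within {a..b})"
    by (rule integral_has_vector_derivative) (use g xab in \<open>auto intro: continuous_on_subset\<close>)
  have d2: "((\<lambda>u. integral {a..u} g - integral {a..0} g) has_vector_derivative g x) (at x within {a..b})"
    using has_vector_derivative_diff[OF d1 has_vector_derivative_const] by simp
  have d3: "((\<lambda>u. oint u g) has_vector_derivative g x) (at x within {a..b})"
    by (rule has_vector_derivative_transform_within[OF d2 zero_less_one xab])
       (use g in \<open>auto simp: a_def intro!: oint_repr[symmetric]\<close>)
  have "x \<in> interior {a..b}" unfolding a_def b_def by auto
  then have "at x within {a..b} = at x" by (rule at_within_interior)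
  then show ?thesis using d3 by simp
qed

lemma Q_shift:
  fixes \<Phi> :: "real \<Rightarrow> complex"
  assumes c: "continuous_on UNIV \<Phi>" and p: "\<forall>x. \<Phi> (x + 1) = \<Phi> x"
  shows "Q_alpha \<alpha> \<Phi> (x + 1) = Q_alpha \<alpha> \<Phi> 1 + exp (\<i> * complex_of_real \<alpha>) * Q_alpha \<alpha> \<Phi> x"
proof -
  define g where "g = (\<lambda>t. \<Phi> t * exp (\<i> * complex_of_real (\<alpha> * t)))"
  define E where "E = exp (\<i> * complex_of_real \<alpha>)"
  have gc: "continuous_on UNIV g" unfolding g_def
    by (intro continuous_intros c)
  have gs: "g (t + 1) = E * g t" for t
    unfolding g_def E_def using p[rule_format, of t] by (simp add: distrib_left exp_add algebra_simps add.commute)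
  define F where "F = (\<lambda>u. oint (u + 1) g - oint 1 g - E * oint u g)"
  have "(F has_vector_derivative 0) (at u)" for u
  proof -
    have s: "((\<lambda>u. u + 1) has_vector_derivative 1) (at u)"
      by (auto intro!: derivative_eq_intros)
    have "(((\<lambda>u. oint u g) \<circ> (\<lambda>u. u + 1)) has_vector_derivative (1 *\<^sub>R g (u + 1))) (at u)"
      by (rule vector_diff_chain_at[OF s oint_deriv[OF gc]])
    then have "((\<lambda>u. oint (u + 1) g) has_vector_derivative g (u + 1)) (at u)" by (simp add: o_def)
    then have "(F has_vector_derivative (g (u + 1) - 0 - E * g u)) (at u)"
      unfolding F_def
      by (intro has_vector_derivative_diff has_vector_derivative_const has_vector_derivative_mult_right oint_deriv[OF gc])
    then show ?thesis using gs by simp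
  qed
  then have "\<exists>c. \<forall>x\<in>UNIV. F x = c"
    by (intro has_derivative_zero_constant) (auto simp: has_vector_derivative_def intro: has_derivative_at_withinI)
  then obtain c where "\<And>x. F x = c" by auto
  moreover have "F 0 = 0" unfolding F_def oint_def by simp
  ultimately have "F x = 0" by metis
  then show ?thesis unfolding F_def Q_alpha_def g_def E_def by (simp add: diff_eq_eq)
qed

lemma per_floor:
  assumes p: "\<forall>x. f (x + 1) = f (x::real)"
  shows "f x = f (x - of_int \<lfloor>x\<rfloor>)"
proof -
  have n: "f (y + real n) = f y" for y n
  proof (induction n)
    case (Suc n)
    have "f (y + real (Suc n)) = f ((y + real n) + 1)" by (simp add: algebra_simps)
    also have "\<dots> = f (y + real n)" using p by blast
    finally show ?case using Suc by simp
  qed simp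
  have m: "f (y - real n) = f y" for y n
    using n[of "y - real n" n] by simp
  show ?thesis
  proof (cases "\<lfloor>x\<rfloor> \<ge> 0")
    case True
    then have "x - of_int \<lfloor>x\<rfloor> = x - real (nat \<lfloor>x\<rfloor>)" by simp
    then show ?thesis using m by metis
  next
    case False
    then have "x - of_int \<lfloor>x\<rfloor> = x + real (nat (- \<lfloor>x\<rfloor>))" by simp
    then show ?thesis using n by metis
  qed
qed

lemma tilde_aux:
  fixes q1 qx e D E :: complex
  assumes "D * E = 1"
  shows "- \<i> * (q1 + E * qx) * (e * D) * (1 - E) + \<i> * q1 * (e * D) = - \<i> * qx * e * (1 - E) + \<i> * q1 * e"
proof -
  have "- \<i> * (q1 + E * qx) * (e * D) * (1 - E) + \<i> * q1 * (e * D) = \<i> * e * (D * E) * (q1 - qx * (1 - E))"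
    by (simp add: algebra_simps)
  then show ?thesis using assms by (simp add: algebra_simps)
qed

lemma Phi_tilde_per:
  fixes \<Phi> :: "real \<Rightarrow> complex"
  assumes c: "continuous_on UNIV \<Phi>" and p: "\<forall>x. \<Phi> (x + 1) = \<Phi> x"
  shows "Phi_tilde \<alpha> \<Phi> (x + 1) = Phi_tilde \<alpha> \<Phi> x"
proof -
  define E where "E = exp (\<i> * complex_of_real \<alpha>)"
  define e where "e = exp (- \<i> * complex_of_real (\<alpha> * x))"
  have ee: "exp (- \<i> * complex_of_real (\<alpha> * (x + 1))) = e * exp (- \<i> * complex_of_real \<alpha>)"
    unfolding e_def by (simp add: distrib_left exp_add[symmetric] algebra_simps)
  have EE: "exp (- \<i> * complex_of_real \<alpha>) * E = 1"
    unfolding E_def by (simp add: exp_add[symmetric])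
  show ?thesis
    unfolding Phi_tilde_def Q_shift[OF c p] ee
    unfolding E_def[symmetric] e_def[symmetric]
    by (rule tilde_aux[OF EE])
qed

lemma int_norm_bound:
  fixes g :: "real \<Rightarrow> complex"
  assumes "continuous_on UNIV g" "a \<le> b" "\<And>t. norm (g t) \<le> M"
  shows "norm (integral {a..b} g) \<le> M * (b - a)"
proof -
  have M: "0 \<le> M" using assms(3)[of 0] norm_ge_zero[of "g 0"] by linarith
  have "g integrable_on {a..b}"
    by (rule integrable_continuous_real) (rule continuous_on_subset[OF assms(1)], simp)
  then have "(g has_integral integral {a..b} g) (cbox a b)"
    using integrable_integral by simp
  from has_integral_bound[OF M this] assms(2,3) show ?thesis by simp
qed

lemma Phi_tilde_bound:
  fixes \<Phi> :: "real \<Rightarrow> complex"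
  assumes c: "continuous_on UNIV \<Phi>" and M: "\<And>t. cmod (\<Phi> t) \<le> M" and x: "0 \<le> x" "x \<le> 1"
  shows "cmod (Phi_tilde \<alpha> \<Phi> x) \<le> M"
proof -
  define g where "g = (\<lambda>t. \<Phi> t * exp (\<i> * complex_of_real (\<alpha> * t)))"
  define E where "E = exp (\<i> * complex_of_real \<alpha>)"
  define e where "e = exp (- \<i> * complex_of_real (\<alpha> * x))"
  have gc: "continuous_on UNIV g" unfolding g_def
    by (intro continuous_intros c)
  have gM: "norm (g t) \<le> M" for t unfolding g_def using M[of t] by (simp add: norm_mult)
  have ne: "norm e = 1" "norm E = 1" unfolding e_def E_def by (simp_all add: norm_exp_eq_Re)
  have comb: "integral {0..x} g + integral {x..1} g = integral {0..1} g"
    by (rule Henstock_Kurzweil_Integration.integral_combine) (use x gc in \<open>auto intro: integrable_continuous_real continuous_on_subset\<close>)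
  have Q: "Q_alpha \<alpha> \<Phi> x = integral {0..x} g" "Q_alpha \<alpha> \<Phi> 1 = integral {0..1} g"
    unfolding Q_alpha_def oint_def g_def using x by auto
  have eq: "Phi_tilde \<alpha> \<Phi> x = \<i> * e * (integral {x..1} g + E * integral {0..x} g)"
    unfolding Phi_tilde_def Q e_def[symmetric] E_def[symmetric] comb[symmetric]
    by (simp add: algebra_simps)
  have "cmod (Phi_tilde \<alpha> \<Phi> x) \<le> norm (integral {x..1} g) + norm (integral {0..x} g)"
    unfolding eq using ne norm_triangle_ineq[of "integral {x..1} g" "E * integral {0..x} g"] by (simp add: norm_mult)
  also have "\<dots> \<le> M * (1 - x) + M * (x - 0)"
    by (intro add_mono int_norm_bound gc gM) (use x in auto)
  finally show ?thesis by (simp add: algebra_simps)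
qed

theorem lemma2p4:
  fixes w :: "real \<Rightarrow> real" and K :: int and \<alpha> :: real
  assumes "continuous_on UNIV (\<lambda>x. exp (\<i> * complex_of_real (w x)))"
    and "\<forall>x. exp (\<i> * complex_of_real (w (x + 1))) = exp (\<i> * complex_of_real (w x))"
  shows "\<forall>\<Phi> \<in> C_per. unif_norm (lambda_op w \<alpha> K \<Phi>) \<le> 2 * unif_norm \<Phi>"
proof
  fix \<Phi> assume "\<Phi> \<in> C_per"
  then have c: "continuous_on UNIV \<Phi>" and p: "\<forall>x. \<Phi> (x + 1) = \<Phi> x"
    unfolding C_per_def by auto
  have "compact (\<Phi> ` {0..1})"
    by (rule compact_continuous_image) (use c in \<open>auto intro: continuous_on_subset\<close>)
  then obtain B where B: "\<And>y. y \<in> \<Phi> ` {0..1} \<Longrightarrow> norm y \<le> B"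
    using compact_imp_bounded bounded_iff by metis
  have fl: "x - of_int \<lfloor>x\<rfloor> \<in> {0..1}" for x :: real
    using floor_correct[of x] by (simp del: floor_correct; linarith)
  have bd: "cmod (\<Phi> x) \<le> B" for x
  proof -
    have "\<Phi> (x - of_int \<lfloor>x\<rfloor>) \<in> \<Phi> ` {0..1}" using fl[of x] by (rule imageI)
    then have "cmod (\<Phi> (x - of_int \<lfloor>x\<rfloor>)) \<le> B" by (rule B)
    then show ?thesis using per_floor[OF p, of x] by simp
  qed
  have bdd: "bdd_above (range (\<lambda>x. cmod (\<Phi> x)))"
    by (rule bdd_aboveI2) (rule bd)
  define M where "M = unif_norm \<Phi>"
  have M: "cmod (\<Phi> t) \<le> M" for t
    unfolding M_def unif_norm_def by (rule cSUP_upper[OF _ bdd]) simp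
  have M0: "0 \<le> M" using M[of 0] norm_ge_zero[of "\<Phi> 0"] by linarith
  have pt: "cmod (lambda_op w \<alpha> K \<Phi> x) \<le> 2 * M" for x
  proof -
    have "cmod (exp (- 2 * of_int K * \<i> * complex_of_real (w x))) = 1"
      by (simp add: norm_exp_eq_Re)
    then have "cmod (lambda_op w \<alpha> K \<Phi> x) = cmod (Phi_tilde \<alpha> \<Phi> x)"
      unfolding lambda_op_def by (simp add: norm_mult)
    also have "\<dots> = cmod (Phi_tilde \<alpha> \<Phi> (x - of_int \<lfloor>x\<rfloor>))"
      using per_floor[of "Phi_tilde \<alpha> \<Phi>" x, OF allI[OF Phi_tilde_per[OF c p]]] by simp
    also have "\<dots> \<le> M"
      using Phi_tilde_bound[OF c M] fl[of x] by auto
    finally show ?thesis using M0 by simp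
  qed
  show "unif_norm (lambda_op w \<alpha> K \<Phi>) \<le> 2 * unif_norm \<Phi>"
    unfolding M_def[symmetric] unif_norm_def[of "lambda_op w \<alpha> K \<Phi>"]
    by (rule cSUP_least) (use pt in auto)
qed

end
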